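(* Let $V$ be a vector space over a field $\mathbb F$, and let $\mathcal S=\{\tau^1,\tau^2,\tau^3,\dots\}\subset\mathcal T(V^* )$ contain exactly one symmetric tensor $\tau^n\in\odot^nV^*$ for each $n\in\mathbb N$. Then the permutation invariant subalgebra generated by $\mathcal S$ equals $$\mathcal A_{\mathrm{perm}}(\mathcal S)=\mathbb F\oplus\bigoplus_{n=1}^\infty\operatorname{span}\{\tau^{\mathbf P}:\mathbf P\in\mathbf{Part}(n)\}.$$
   Context: $\mathcal T(V^* )=\bigoplus_{n\ge0}\otimes^nV^*$, where $\otimes^nV^*$ is the space of $n$-multilinear forms $V^n\to\mathbb F$ ($\otimes^0V^*=\mathbb F$), with product $(\tau\otimes\tau')(v_1,\dots,v_{n+m})=\tau(v_1,\dots,v_n)\tau'(v_{n+1},\dots,v_{n+m})$ (scalars act by scalar multiplication). $S_n$ acts on $\otimes^nV^*$ by $(P_\sigma\tau)(v_1,\dots,v_n)=\tau(v_{\sigma^{-1}(1)},\dots,v_{\sigma^{-1}(n)})$; $\odot^nV^*$ is the subspace of tensors fixed by all $P_\sigma$. A unital subalgebra is a linear subspace containing $\mathbb F$ and closed under $\otimes$; it is graded if it is the direct sum of its intersections $\mathcal A_n$ with the $\otimes^nV^*$, and permutation invariant if it is graded and each $\mathcal A_n$ is preserved by $S_n$. $\mathcal A_{\mathrm{perm}}(\mathcal S)$ is the intersection of all permutation invariant unital subalgebras containing $\mathcal S$. $\mathbf{Part}(n)$ is the set of partitions $\mathbf P=\{P_1,\dots,P_r\}$ of $\{1,\dots,n\}$;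 for such $\mathbf P$ with $n_i=|P_i|$, $\tau^{\mathbf P}(v_1,\dots,v_n)=\prod_{i=1}^r\tau^{n_i}\big((v_j)_{j\in P_i}\big)$ (independent of the order within $P_i$ by symmetry). *)

theory Defs
  imports Complex_Main "HOL-Combinatorics.Permutations" "HOL-Library.Disjoint_Sets" "HOL-Library.Function_Algebras"
begin

text \<open>An element of the tensor algebra T(V*) is represented by its graded components:
  component n is a function on lists of vectors, an n-multilinear form on lists of
  length n and zero on lists of any other length.\<close>

type_synonym ('v, 'a) tensor = "nat \<Rightarrow> 'v list \<Rightarrow> 'a"

definition multilin :: "('a::field \<Rightarrow> 'v::ab_group_add \<Rightarrow> 'v) \<Rightarrow> nat \<Rightarrow> ('v list \<Rightarrow> 'a) \<Rightarrow> bool" where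
  "multilin scale n f \<longleftrightarrow>
     (\<forall>vs. length vs \<noteq> n \<longrightarrow> f vs = 0) \<and>
     (\<forall>vs i c x y. length vs = n \<longrightarrow> i < n \<longrightarrow>
        f (vs[i := scale c x + y]) = c * f (vs[i := x]) + f (vs[i := y]))"

definition tensor_alg :: "('a::field \<Rightarrow> 'v::ab_group_add \<Rightarrow> 'v) \<Rightarrow> ('v, 'a) tensor set" where
  "tensor_alg scale = {t. finite {n. t n \<noteq> 0} \<and> (\<forall>n. multilin scale n (t n))}"

definition hom_part :: "nat \<Rightarrow> ('v list \<Rightarrow> 'a::zero) \<Rightarrow> ('v, 'a) tensor" where
  "hom_part n f = (\<lambda>k. if k = n then f else 0)"

definition scalar_tensor :: "'a::zero \<Rightarrow> ('v, 'a) tensor" where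
  "scalar_tensor c = hom_part 0 (\<lambda>vs. if vs = [] then c else 0)"

definition tprod :: "('v, 'a::comm_ring_1) tensor \<Rightarrow> ('v, 'a) tensor \<Rightarrow> ('v, 'a) tensor" where
  "tprod t u = (\<lambda>k vs. if length vs = k
      then (\<Sum>i\<le>k. t i (take i vs) * u (k - i) (drop i vs)) else 0)"

definition perm_tensor :: "nat \<Rightarrow> (nat \<Rightarrow> nat) \<Rightarrow> ('v list \<Rightarrow> 'a::zero) \<Rightarrow> ('v list \<Rightarrow> 'a)" where
  "perm_tensor n \<sigma> f = (\<lambda>vs. if length vs = n
      then f (map (\<lambda>i. vs ! (inv \<sigma> i)) [0..<n]) else 0)"

definition symmetric_tensor :: "('a::field \<Rightarrow> 'v::ab_group_add \<Rightarrow> 'v) \<Rightarrow> nat \<Rightarrow> ('v list \<Rightarrow> 'a) \<Rightarrow> bool" where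
  "symmetric_tensor scale n f \<longleftrightarrow> multilin scale n f \<and>
     (\<forall>\<sigma>. \<sigma> permutes {..<n} \<longrightarrow> perm_tensor n \<sigma> f = f)"

definition unital_subalg :: "('a::field \<Rightarrow> 'v::ab_group_add \<Rightarrow> 'v) \<Rightarrow> ('v, 'a) tensor set \<Rightarrow> bool" where
  "unital_subalg scale A \<longleftrightarrow> A \<subseteq> tensor_alg scale \<and>
     (\<forall>c. scalar_tensor c \<in> A) \<and>
     (\<forall>t\<in>A. \<forall>u\<in>A. t + u \<in> A) \<and>
     (\<forall>c. \<forall>t\<in>A. (\<lambda>k vs. c * t k vs) \<in> A) \<and>
     (\<forall>t\<in>A. \<forall>u\<in>A. tprod t u \<in> A)"

text \<open>Graded: A is the direct sum of the A_n = A \<inter> (components of degree n), i.e. every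
  homogeneous component of an element of A lies in A.\<close>
definition graded_subalg :: "('a::field \<Rightarrow> 'v::ab_group_add \<Rightarrow> 'v) \<Rightarrow> ('v, 'a) tensor set \<Rightarrow> bool" where
  "graded_subalg scale A \<longleftrightarrow> unital_subalg scale A \<and>
     (\<forall>t\<in>A. \<forall>n. hom_part n (t n) \<in> A)"

definition perm_inv_subalg :: "('a::field \<Rightarrow> 'v::ab_group_add \<Rightarrow> 'v) \<Rightarrow> ('v, 'a) tensor set \<Rightarrow> bool" where
  "perm_inv_subalg scale A \<longleftrightarrow> graded_subalg scale A \<and>
     (\<forall>n f \<sigma>. hom_part n f \<in> A \<longrightarrow> \<sigma> permutes {..<n} \<longrightarrow> hom_part n (perm_tensor n \<sigma> f) \<in> A)"

definition A_perm :: "('a::field \<Rightarrow> 'v::ab_group_add \<Rightarrow> 'v) \<Rightarrow> ('v, 'a) tensor set \<Rightarrow> ('v, 'a) tensor set" where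
  "A_perm scale S = \<Inter>{A. perm_inv_subalg scale A \<and> S \<subseteq> A}"

definition part_tensor :: "('v, 'a::comm_ring_1) tensor \<Rightarrow> nat \<Rightarrow> nat set set \<Rightarrow> ('v list \<Rightarrow> 'a)" where
  "part_tensor \<tau> n P = (\<lambda>vs. if length vs = n
      then (\<Prod>B\<in>P. \<tau> (card B) (map (\<lambda>j. vs ! j) (sorted_list_of_set B))) else 0)"

definition fun_span :: "('v list \<Rightarrow> 'a::field) set \<Rightarrow> ('v list \<Rightarrow> 'a) set" where
  "fun_span X = module.span (\<lambda>c f. (\<lambda>x. c * f x)) X"

end

theory Submission
  imports Defs
begin

lemma fs_module: "module (\<lambda>c (f::'v list \<Rightarrow> 'a::field). (\<lambda>x. c * f x))"
  by unfold_locales (auto simp: fun_eq_iff algebra_simps)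

lemma sum_fun_apply: "(\<Sum>i\<in>I. f i) x = (\<Sum>i\<in>I. f i x)"
  by (induct I rule: infinite_finite_induct) auto

lemma fun_span_add: "f \<in> fun_span X \<Longrightarrow> g \<in> fun_span X \<Longrightarrow> f + g \<in> fun_span X"
  unfolding fun_span_def by (rule module.span_add[OF fs_module])
lemma fun_span_scale: "f \<in> fun_span X \<Longrightarrow> (\<lambda>x. c * f x) \<in> fun_span X"
  unfolding fun_span_def by (rule module.span_scale[OF fs_module])
lemma fun_span_zero: "0 \<in> fun_span X"
  unfolding fun_span_def by (rule module.span_zero[OF fs_module])
lemma fun_span_base: "f \<in> X \<Longrightarrow> f \<in> fun_span X"
  unfolding fun_span_def by (rule module.span_base[OF fs_module])
lemma fun_span_sum: "(\<And>i. i \<in> I \<Longrightarrow> f i \<in> fun_span X) \<Longrightarrow> sum f I \<in> fun_span X"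
  unfolding fun_span_def by (rule module.span_sum[OF fs_module])
lemma fun_span_induct:
  fixes f :: "'v list \<Rightarrow> 'a::field"
  assumes "f \<in> fun_span X" "P 0" "\<And>f g. P f \<Longrightarrow> P g \<Longrightarrow> P (f + g)"
    "\<And>c f. P f \<Longrightarrow> P (\<lambda>x. c * f x)" "\<And>f. f \<in> X \<Longrightarrow> P f"
  shows "P f"
proof -
  interpret m: module "\<lambda>c (f::'v list \<Rightarrow> 'a). (\<lambda>x. c * f x)" by (rule fs_module)
  have "m.subspace (Collect P)" using assms by (auto simp: m.subspace_def)
  then show ?thesis using m.span_induct[OF assms(1)[unfolded fun_span_def]] assms(5) by blast
qed

definition join :: "nat \<Rightarrow> nat \<Rightarrow> ('v list \<Rightarrow> 'a::comm_ring_1) \<Rightarrow> ('v list \<Rightarrow> 'a) \<Rightarrow> ('v list \<Rightarrow> 'a)" where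
  "join i j f g = (\<lambda>vs. if length vs = i + j then f (take i vs) * g (drop i vs) else 0)"

lemma tprod_join: "tprod t u k = (\<Sum>i\<le>k. join i (k - i) (t i) (u (k - i)))"
  by (auto simp: fun_eq_iff tprod_def join_def sum_fun_apply)

lemma multilin_zero: "multilin s n 0"
  by (simp add: multilin_def)
lemma multilin_add: "multilin s n f \<Longrightarrow> multilin s n g \<Longrightarrow> multilin s n (f + g)"
  by (simp add: multilin_def algebra_simps)
lemma multilin_scale: "multilin s n f \<Longrightarrow> multilin s n (\<lambda>x. c * f x)"
  by (simp add: multilin_def algebra_simps)
lemma multilin_sum: "(\<And>i. i \<in> I \<Longrightarrow> multilin s n (f i)) \<Longrightarrow> multilin s n (\<Sum>i\<in>I. f i)"
  by (induct I rule: infinite_finite_induct) (auto intro: multilin_zero multilin_add)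

lemma multilin_join:
  fixes s :: "'a::field \<Rightarrow> 'v::ab_group_add \<Rightarrow> 'v"
  assumes f: "multilin s i f" and g: "multilin s j g"
  shows "multilin s (i + j) (join i j f g)"
  unfolding multilin_def
proof (intro conjI allI impI)
  fix vs :: "'v list" assume "length vs \<noteq> i + j" then show "join i j f g vs = 0" by (simp add: join_def)
next
  fix vs :: "'v list" and idx c x y assume l: "length vs = i + j" and idx: "idx < i + j"
  show "join i j f g (vs[idx := s c x + y]) = c * join i j f g (vs[idx := x]) + join i j f g (vs[idx := y])"
  proof (cases "idx < i")
    case True
    have "f ((take i vs)[idx := s c x + y]) = c * f ((take i vs)[idx := x]) + f ((take i vs)[idx := y])"
      using f True l unfolding multilin_def by auto
    then show ?thesis using True l by (simp add: join_def take_update_swap algebra_simps)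
  next
    case False
    have "g ((drop i vs)[idx - i := s c x + y]) = c * g ((drop i vs)[idx - i := x]) + g ((drop i vs)[idx - i := y])"
      using g False l idx unfolding multilin_def by auto
    then show ?thesis using False l by (simp add: join_def drop_update_swap algebra_simps)
  qed
qed

lemma mset_sorted_set: "mset (sorted_list_of_set B) = mset_set B"
  by (metis mset_sorted_list_of_multiset sorted_list_of_mset_set)

lemma sym_mset:
  assumes "symmetric_tensor s m f" "length xs = m" "mset xs = mset ys"
  shows "f xs = f ys"
proof -
  obtain p where p: "p permutes {..<length ys}" "permute_list p ys = xs"
    using mset_eq_permutation[OF assms(3)] by blast
  have ly: "length ys = m" using assms(2,3) mset_eq_length by metis
  have ip: "inv p permutes {..<m}" using permutes_inv p ly by simp
  have "perm_tensor m (inv p) f ys = f ys" using assms(1) ip unfolding symmetric_tensor_def by auto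
  moreover have "perm_tensor m (inv p) f ys = f xs" using p ly
    by (simp add: perm_tensor_def permute_list_def inv_inv_eq permutes_bij)
  ultimately show ?thesis by simp
qed

lemma block_eq:
  assumes sym: "\<forall>n\<ge>1. symmetric_tensor s n (\<tau> n)" and "finite B" "B \<noteq> {}" "card B = card C"
    and "image_mset g (mset_set B) = image_mset h (mset_set C)"
  shows "\<tau> (card B) (map g (sorted_list_of_set B)) = \<tau> (card C) (map h (sorted_list_of_set C))"
proof -
  have "card B \<ge> 1" using assms(2,3) by (simp add: Suc_le_eq card_gt_0_iff)
  then have "symmetric_tensor s (card B) (\<tau> (card B))" using sym by auto
  then have "\<tau> (card B) (map g (sorted_list_of_set B)) = \<tau> (card B) (map h (sorted_list_of_set C))"
    by (rule sym_mset) (use assms in \<open>auto simp: mset_map mset_sorted_set\<close>)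
  then show ?thesis using assms(4) by simp
qed

lemma partition_on_Un:
  "partition_on A P \<Longrightarrow> partition_on B Q \<Longrightarrow> A \<inter> B = {} \<Longrightarrow> partition_on (A \<union> B) (P \<union> Q)"
  unfolding partition_on_def disjoint_def pairwise_def disjnt_def by (auto; blast)

lemma partition_on_blocks:
  "partition_on A P \<Longrightarrow> B \<in> P \<Longrightarrow> B \<subseteq> A \<and> B \<noteq> {}"
  unfolding partition_on_def by blast

lemma perm_part:
  assumes sym: "\<forall>n\<ge>1. symmetric_tensor s n (\<tau> n)" and sg: "\<sigma> permutes {..<n}"
    and P: "partition_on {..<n} P"
  shows "perm_tensor n \<sigma> (part_tensor \<tau> n P) = part_tensor \<tau> n ((`) (inv \<sigma>) ` P)"
proof
  fix vs :: "'b list"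
  show "perm_tensor n \<sigma> (part_tensor \<tau> n P) vs = part_tensor \<tau> n ((`) (inv \<sigma>) ` P) vs"
  proof (cases "length vs = n")
    case False then show ?thesis by (simp add: perm_tensor_def part_tensor_def)
  next
    case True
    define ws where "ws = map (\<lambda>i. vs ! inv \<sigma> i) [0..<n]"
    have injs: "inj (inv \<sigma>)" using permutes_inv[OF sg] by (rule permutes_inj)
    have inj2: "inj_on ((`) (inv \<sigma>)) P" using injs by (simp add: inj_on_def inj_image_eq_iff)
    have "part_tensor \<tau> n ((`) (inv \<sigma>) ` P) vs =
       (\<Prod>B\<in>P. \<tau> (card (inv \<sigma> ` B)) (map ((!) vs) (sorted_list_of_set (inv \<sigma> ` B))))"
      using True by (simp add: part_tensor_def prod.reindex[OF inj2])
    also have "\<dots> = (\<Prod>B\<in>P. \<tau> (card B) (map ((!) ws) (sorted_list_of_set B)))"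
    proof (rule prod.cong[OF refl])
      fix B assume B: "B \<in> P"
      then have Bs: "B \<subseteq> {..<n}" "B \<noteq> {}" using partition_on_blocks[OF P] by auto
      then have fB: "finite B" using finite_subset by blast
      have "image_mset ((!) ws) (mset_set B) = image_mset (\<lambda>j. vs ! inv \<sigma> j) (mset_set B)"
        by (rule image_mset_cong) (use Bs fB in \<open>auto simp: ws_def\<close>)
      also have "\<dots> = image_mset ((!) vs) (mset_set (inv \<sigma> ` B))"
        using injs by (simp add: image_mset_mset_set[symmetric] inj_on_subset image_mset.compositionality o_def)
      finally show "\<tau> (card (inv \<sigma> ` B)) (map ((!) vs) (sorted_list_of_set (inv \<sigma> ` B))) =
          \<tau> (card B) (map ((!) ws) (sorted_list_of_set B))"
        using block_eq[OF sym fB Bs(2), of "inv \<sigma> ` B" "(!) ws" "(!) vs"] injs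
        by (simp add: card_image inj_on_subset)
    qed
    also have "\<dots> = perm_tensor n \<sigma> (part_tensor \<tau> n P) vs"
      using True by (simp add: perm_tensor_def part_tensor_def ws_def)
    finally show ?thesis by simp
  qed
qed

lemma join_part:
  assumes sym: "\<forall>n\<ge>1. symmetric_tensor s n (\<tau> n)"
    and P: "partition_on {..<i} P" and Q: "partition_on {..<j} Q"
  shows "join i j (part_tensor \<tau> i P) (part_tensor \<tau> j Q) = part_tensor \<tau> (i + j) (P \<union> (`) ((+) i) ` Q)"
proof
  fix vs
  show "join i j (part_tensor \<tau> i P) (part_tensor \<tau> j Q) vs = part_tensor \<tau> (i + j) (P \<union> (`) ((+) i) ` Q) vs"
  proof (cases "length vs = i + j")
    case False then show ?thesis by (simp add: join_def part_tensor_def)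
  next
    case True
    have fP: "finite P" using finite_elements[OF _ P] by simp
    have fQ: "finite Q" using finite_elements[OF _ Q] by simp
    have injsh: "inj_on ((`) ((+) i)) Q" by (auto simp: inj_on_def inj_image_eq_iff)
    have disj: "P \<inter> (`) ((+) i) ` Q = {}"
    proof (rule ccontr)
      assume "P \<inter> (`) ((+) i) ` Q \<noteq> {}"
      then obtain C where C: "C \<in> Q" "(+) i ` C \<in> P" by auto
      then obtain c where "c \<in> C" using partition_on_blocks[OF Q] by blast
      then show False using partition_on_blocks[OF P C(2)] by auto
    qed
    have "part_tensor \<tau> (i + j) (P \<union> (`) ((+) i) ` Q) vs =
      (\<Prod>B\<in>P. \<tau> (card B) (map ((!) vs) (sorted_list_of_set B))) *
      (\<Prod>B\<in>(`) ((+) i) ` Q. \<tau> (card B) (map ((!) vs) (sorted_list_of_set B)))"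
      using True prod.union_disjoint[OF fP finite_imageI[OF fQ] disj] by (simp add: part_tensor_def)
    also have "(\<Prod>B\<in>P. \<tau> (card B) (map ((!) vs) (sorted_list_of_set B))) = part_tensor \<tau> i P (take i vs)"
    proof -
      have "(\<Prod>B\<in>P. \<tau> (card B) (map ((!) vs) (sorted_list_of_set B))) =
            (\<Prod>B\<in>P. \<tau> (card B) (map ((!) (take i vs)) (sorted_list_of_set B)))"
      proof (rule prod.cong[OF refl])
        fix B assume "B \<in> P"
        then have Bs: "B \<subseteq> {..<i}" using partition_on_blocks[OF P] by auto
        then have "finite B" using finite_subset by blast
        then have "map ((!) vs) (sorted_list_of_set B) = map ((!) (take i vs)) (sorted_list_of_set B)"
          using Bs by (intro map_cong) auto
        then show "\<tau> (card B) (map ((!) vs) (sorted_list_of_set B)) = \<tau> (card B) (map ((!) (take i vs)) (sorted_list_of_set B))"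
          by (simp only:)
      qed
      then show ?thesis using True by (simp add: part_tensor_def)
    qed
    also have "(\<Prod>B\<in>(`) ((+) i) ` Q. \<tau> (card B) (map ((!) vs) (sorted_list_of_set B))) = part_tensor \<tau> j Q (drop i vs)"
    proof -
      have "(\<Prod>B\<in>(`) ((+) i) ` Q. \<tau> (card B) (map ((!) vs) (sorted_list_of_set B))) =
            (\<Prod>B\<in>Q. \<tau> (card ((+) i ` B)) (map ((!) vs) (sorted_list_of_set ((+) i ` B))))"
        by (simp add: prod.reindex[OF injsh])
      also have "\<dots> = (\<Prod>B\<in>Q. \<tau> (card B) (map ((!) (drop i vs)) (sorted_list_of_set B)))"
      proof (rule prod.cong[OF refl])
        fix B assume "B \<in> Q"
        then have Bs: "B \<subseteq> {..<j}" "B \<noteq> {}" using partition_on_blocks[OF Q] by auto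
        then have fB: "finite B" using finite_subset by blast
        have inj: "inj_on ((+) i) B" by simp
        have "image_mset ((!) vs) (mset_set ((+) i ` B)) = image_mset (\<lambda>c. vs ! (i + c)) (mset_set B)"
          by (simp add: image_mset_mset_set[OF inj, symmetric] image_mset.compositionality o_def)
        also have "\<dots> = image_mset ((!) (drop i vs)) (mset_set B)"
          by (rule image_mset_cong) (use True in simp)
        finally have "\<tau> (card ((+) i ` B)) (map ((!) vs) (sorted_list_of_set ((+) i ` B))) =
             \<tau> (card B) (map ((!) (drop i vs)) (sorted_list_of_set B))"
          using block_eq[OF sym finite_imageI[OF fB], where C=B and g="(!) vs" and h="(!) (drop i vs)"] Bs
          by (simp add: card_image)
        then show "\<tau> (card ((+) i ` B)) (map ((!) vs) (sorted_list_of_set ((+) i ` B))) =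
             \<tau> (card B) (map ((!) (drop i vs)) (sorted_list_of_set B))" .
      qed
      finally show ?thesis using True by (simp add: part_tensor_def)
    qed
    finally show ?thesis using True by (simp add: join_def)
  qed
qed

lemma partition_shift:
  fixes i j :: nat
  assumes P: "partition_on {..<i} P" and Q: "partition_on {..<j} Q"
  shows "partition_on {..<i + j} (P \<union> (`) ((+) i) ` Q)"
proof -
  have "partition_on ((+) i ` {..<j}) ((`) ((+) i) ` Q - {{}})"
    by (rule partition_on_inj_image[OF Q]) (auto simp: inj_on_def)
  moreover have "(`) ((+) i) ` Q - {{}} = (`) ((+) i) ` Q" using partition_onD3[OF Q] by auto
  moreover have "(+) i ` {..<j} = {i..<i+j}" by (simp add: lessThan_atLeast0 add.commute)
  ultimately have "partition_on {i..<i+j} ((`) ((+) i) ` Q)" by simp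
  from partition_on_Un[OF P this] have "partition_on ({..<i} \<union> {i..<i+j}) (P \<union> (`) ((+) i) ` Q)"
    by (simp add: ivl_disj_int)
  moreover have "{..<i} \<union> {i..<i+j} = {..<i+j}" by auto
  ultimately show ?thesis by simp
qed

lemma join_zero1[simp]: "join i j 0 g = 0" by (simp add: join_def fun_eq_iff)
lemma join_zero2[simp]: "join i j f 0 = 0" by (simp add: join_def fun_eq_iff)

lemma tprod_hom: "tprod (hom_part a f) (hom_part b g) = hom_part (a + b) (join a b f g)"
proof
  fix k
  have "tprod (hom_part a f) (hom_part b g) k = (\<Sum>i\<le>k. if i = a then join a (k - a) f (hom_part b g (k - a)) else 0)"
    unfolding tprod_join by (rule sum.cong) (auto simp: hom_part_def)
  also have "\<dots> = hom_part (a + b) (join a b f g) k"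
    by (auto simp: hom_part_def)
  finally show "tprod (hom_part a f) (hom_part b g) k = hom_part (a + b) (join a b f g) k" .
qed

lemma hom_part_apply: "hom_part n f k = (if k = n then f else 0)"
  by (simp add: hom_part_def)

lemma tensor_alg_hom: "multilin s n f \<Longrightarrow> hom_part n f \<in> tensor_alg s"
  unfolding tensor_alg_def
  by (auto simp: hom_part_apply multilin_zero intro: finite_subset[of _ "{n}"])

lemma multilin_perm:
  assumes sg: "\<sigma> permutes {..<n}" and f: "multilin s n f"
  shows "multilin s n (perm_tensor n \<sigma> f)"
  unfolding multilin_def
proof (intro conjI allI impI)
  fix vs :: "'b list" assume "length vs \<noteq> n" then show "perm_tensor n \<sigma> f vs = 0" by (simp add: perm_tensor_def)
next
  fix vs :: "'b list" and idx c x y assume l: "length vs = n" and idx: "idx < n"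
  have upd: "map (\<lambda>i. vs[idx := z] ! inv \<sigma> i) [0..<n] = (map (\<lambda>i. vs ! inv \<sigma> i) [0..<n])[\<sigma> idx := z]" for z
  proof (rule nth_equalityI)
    fix k assume "k < length (map (\<lambda>i. vs[idx := z] ! inv \<sigma> i) [0..<n])"
    then have k: "k < n" by simp
    have "inv \<sigma> k < n" using permutes_in_image[OF permutes_inv[OF sg]] k by simp
    moreover have "inv \<sigma> k = idx \<longleftrightarrow> \<sigma> idx = k" using permutes_inv_eq[OF sg] by blast
    ultimately show "map (\<lambda>i. vs[idx := z] ! inv \<sigma> i) [0..<n] ! k = (map (\<lambda>i. vs ! inv \<sigma> i) [0..<n])[\<sigma> idx := z] ! k"
      using k l by (auto simp: nth_list_update)
  qed simp
  have si: "\<sigma> idx < n" using permutes_in_image[OF sg] idx by simp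
  show "perm_tensor n \<sigma> f (vs[idx := s c x + y]) = c * perm_tensor n \<sigma> f (vs[idx := x]) + perm_tensor n \<sigma> f (vs[idx := y])"
    using l f si unfolding perm_tensor_def multilin_def by (simp add: upd)
qed

definition PX :: "('v, 'a::comm_ring_1) tensor \<Rightarrow> nat \<Rightarrow> ('v list \<Rightarrow> 'a) set" where
  "PX \<tau> n = {part_tensor \<tau> n P | P. partition_on {..<n} P}"


lemma perm_tensor_linear:
  fixes f g :: "'v list \<Rightarrow> 'a::comm_ring_1"
  shows
  "perm_tensor n \<sigma> (0 :: 'v list \<Rightarrow> 'a) = 0"
  "perm_tensor n \<sigma> (f + g) = perm_tensor n \<sigma> f + perm_tensor n \<sigma> g"
  "perm_tensor n \<sigma> (\<lambda>x. c * f x) = (\<lambda>x. c * perm_tensor n \<sigma> f x)"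
  by (auto simp: perm_tensor_def fun_eq_iff)

lemma perm_in_PX:
  fixes \<tau> :: "('v::ab_group_add, 'a::field) tensor"
  assumes sym: "\<forall>n\<ge>1. symmetric_tensor s n (\<tau> n)" and sg: "\<sigma> permutes {..<n}"
    and f: "f \<in> PX \<tau> n"
  shows "perm_tensor n \<sigma> f \<in> PX \<tau> n"
proof -
  obtain P where P: "partition_on {..<n} P" and fP: "f = part_tensor \<tau> n P" using f by (auto simp: PX_def)
  have inj: "inj (inv \<sigma>)" using permutes_inv[OF sg] by (rule permutes_inj)
  have "partition_on (inv \<sigma> ` {..<n}) ((`) (inv \<sigma>) ` P - {{}})"
    by (rule partition_on_inj_image[OF P]) (use inj in \<open>auto simp: inj_on_def\<close>)
  moreover have "inv \<sigma> ` {..<n} = {..<n}" by (rule permutes_image[OF permutes_inv[OF sg]])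
  moreover have "(`) (inv \<sigma>) ` P - {{}} = (`) (inv \<sigma>) ` P" using partition_onD3[OF P] by auto
  ultimately have "partition_on {..<n} ((`) (inv \<sigma>) ` P)" by simp
  then show ?thesis unfolding fP perm_part[OF sym sg P] PX_def by blast
qed

lemma perm_in_span:
  fixes \<tau> :: "('v::ab_group_add, 'a::field) tensor"
  assumes sym: "\<forall>n\<ge>1. symmetric_tensor s n (\<tau> n)" and sg: "\<sigma> permutes {..<n}"
    and f: "f \<in> fun_span (PX \<tau> n)"
  shows "perm_tensor n \<sigma> f \<in> fun_span (PX \<tau> n)"
  apply (rule fun_span_induct[OF f, where P="\<lambda>f. perm_tensor n \<sigma> f \<in> fun_span (PX \<tau> n)"])
     apply (simp_all add: perm_tensor_linear fun_span_zero fun_span_add fun_span_scale)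
  apply (rule fun_span_base, rule perm_in_PX[OF sym sg], assumption)
  done

lemma join_linear:
  "join i j (f + f') g = join i j f g + join i j f' g"
  "join i j (\<lambda>x. c * f x) g = (\<lambda>x. c * join i j f g x)"
  "join i j f (g + g') = join i j f g + join i j f g'"
  "join i j f (\<lambda>x. c * g x) = (\<lambda>x. c * join i j f g x)"
  by (auto simp: join_def fun_eq_iff algebra_simps)

lemma join_in_PX:
  fixes \<tau> :: "('v::ab_group_add, 'a::field) tensor"
  assumes sym: "\<forall>n\<ge>1. symmetric_tensor s n (\<tau> n)"
    and f: "f \<in> PX \<tau> i" and g: "g \<in> PX \<tau> j"
  shows "join i j f g \<in> PX \<tau> (i + j)"
proof -
  obtain P where P: "partition_on {..<i} P" and fP: "f = part_tensor \<tau> i P" using f by (auto simp: PX_def)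
  obtain Q where Q: "partition_on {..<j} Q" and gQ: "g = part_tensor \<tau> j Q" using g by (auto simp: PX_def)
  show ?thesis unfolding fP gQ join_part[OF sym P Q] PX_def
    using partition_shift[OF P Q] by blast
qed

lemma join_in_span:
  fixes \<tau> :: "('v::ab_group_add, 'a::field) tensor"
  assumes sym: "\<forall>n\<ge>1. symmetric_tensor s n (\<tau> n)"
    and f: "f \<in> fun_span (PX \<tau> i)" and g: "g \<in> fun_span (PX \<tau> j)"
  shows "join i j f g \<in> fun_span (PX \<tau> (i + j))"
  apply (rule fun_span_induct[OF f, where P="\<lambda>f. join i j f g \<in> fun_span (PX \<tau> (i + j))"])
     apply (simp_all add: join_linear fun_span_zero fun_span_add fun_span_scale)
  subgoal for f
    apply (rule fun_span_induct[OF g, where P="\<lambda>g. join i j f g \<in> fun_span (PX \<tau> (i + j))"])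
       apply (simp_all add: join_linear fun_span_zero fun_span_add fun_span_scale)
    apply (rule fun_span_base, rule join_in_PX[OF sym], assumption+)
    done
  done

lemma multilin0: "multilin s 0 f \<Longrightarrow> f = (\<lambda>vs. if vs = [] then f [] else 0)"
  by (auto simp: multilin_def fun_eq_iff)

lemma comp0_span:
  fixes \<tau> :: "('v::ab_group_add, 'a::field) tensor"
  assumes "multilin s 0 f"
  shows "f \<in> fun_span (PX \<tau> 0)"
proof -
  have "part_tensor \<tau> 0 {} \<in> PX \<tau> 0" by (auto simp: PX_def partition_on_empty intro!: exI[of _ "{}"])
  then have "(\<lambda>x. f [] * part_tensor \<tau> 0 {} x) \<in> fun_span (PX \<tau> 0)"
    by (intro fun_span_scale fun_span_base)
  moreover have "(\<lambda>x. f [] * part_tensor \<tau> 0 {} x) = f"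
    by (subst (2) multilin0[OF assms]) (auto simp: part_tensor_def fun_eq_iff)
  ultimately show ?thesis by simp
qed

lemma tensor_algD: "t \<in> tensor_alg s \<Longrightarrow> multilin s n (t n)"
  by (simp add: tensor_alg_def)

lemma tensor_alg_bound: "t \<in> tensor_alg s \<Longrightarrow> \<exists>N. \<forall>n>N. t n = 0"
  unfolding tensor_alg_def finite_nat_set_iff_bounded_le by (auto simp: not_le[symmetric])

lemma tprod_tensor_alg:
  assumes t: "t \<in> tensor_alg s" and u: "u \<in> tensor_alg s"
  shows "tprod t u \<in> tensor_alg s"
proof -
  have ml: "multilin s k (tprod t u k)" for k
    unfolding tprod_join
  proof (rule multilin_sum)
    fix i assume "i \<in> {..k}"
    then have "i + (k - i) = k" by simp
    then show "multilin s k (join i (k - i) (t i) (u (k - i)))"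
      using multilin_join[OF tensor_algD[OF t] tensor_algD[OF u], of i "k - i"] by simp
  qed
  obtain N1 where N1: "\<forall>n>N1. t n = 0" using tensor_alg_bound[OF t] by blast
  obtain N2 where N2: "\<forall>n>N2. u n = 0" using tensor_alg_bound[OF u] by blast
  have "tprod t u k = 0" if k: "k > N1 + N2" for k
    unfolding tprod_join
  proof (rule sum.neutral, rule ballI)
    fix i assume "i \<in> {..k}"
    show "join i (k - i) (t i) (u (k - i)) = 0"
    proof (cases "i > N1")
      case True then show ?thesis using N1 by simp
    next
      case False then have "k - i > N2" using k by simp
      then show ?thesis using N2 by simp
    qed
  qed
  then have "{k. tprod t u k \<noteq> 0} \<subseteq> {..N1 + N2}" by (auto simp: not_le[symmetric])
  then have "finite {k. tprod t u k \<noteq> 0}" by (rule finite_subset) simp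
  then show ?thesis using ml by (simp add: tensor_alg_def)
qed

lemma R_comp:
  fixes \<tau> :: "('v::ab_group_add, 'a::field) tensor"
  assumes "t \<in> tensor_alg s" "\<forall>n\<ge>1. t n \<in> fun_span (PX \<tau> n)"
  shows "t n \<in> fun_span (PX \<tau> n)"
  using assms comp0_span[OF tensor_algD[OF assms(1)], of \<tau>] by (cases n) auto

lemma R_subalg:
  fixes \<tau> :: "('v::ab_group_add, 'a::field) tensor" and s :: "'a \<Rightarrow> 'v \<Rightarrow> 'v"
  assumes sym: "\<forall>n\<ge>1. symmetric_tensor s n (\<tau> n)"
  defines "R \<equiv> {t \<in> tensor_alg s. \<forall>n\<ge>1. t n \<in> fun_span (PX \<tau> n)}"
  shows "perm_inv_subalg s R"
  unfolding perm_inv_subalg_def graded_subalg_def unital_subalg_def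
proof (intro conjI allI ballI impI)
  show "R \<subseteq> tensor_alg s" by (auto simp: R_def)
next
  fix c :: 'a
  have "multilin s 0 (\<lambda>vs::'v list. if vs = [] then c else 0)" by (auto simp: multilin_def)
  then show "scalar_tensor c \<in> R"
    by (auto simp: R_def scalar_tensor_def tensor_alg_hom hom_part_apply fun_span_zero)
next
  fix t u assume t: "t \<in> R" and u: "u \<in> R"
  have "t + u \<in> tensor_alg s"
  proof -
    have "{n. (t + u) n \<noteq> 0} \<subseteq> {n. t n \<noteq> 0} \<union> {n. u n \<noteq> 0}" by auto
    then show ?thesis using t u unfolding R_def tensor_alg_def
      by (auto intro: finite_subset multilin_add)
  qed
  then show "t + u \<in> R" using t u by (auto simp: R_def intro: fun_span_add)
  show "tprod t u \<in> R"
  proof -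
    have ta: "t \<in> tensor_alg s" "u \<in> tensor_alg s" using t u by (auto simp: R_def)
    have "tprod t u n \<in> fun_span (PX \<tau> n)" for n
      unfolding tprod_join
    proof (rule fun_span_sum)
      fix i assume "i \<in> {..n}"
      then have "i + (n - i) = n" by simp
      then show "join i (n - i) (t i) (u (n - i)) \<in> fun_span (PX \<tau> n)"
        using join_in_span[OF sym R_comp[OF ta(1)] R_comp[OF ta(2)], of i "n - i"] t u
        by (auto simp: R_def)
    qed
    then show ?thesis using tprod_tensor_alg[OF ta] by (simp add: R_def)
  qed
next
  fix c :: 'a and t assume t: "t \<in> R"
  have "(\<lambda>k vs. c * t k vs) \<in> tensor_alg s"
  proof -
    have "{n. (\<lambda>vs. c * t n vs) \<noteq> 0} \<subseteq> {n. t n \<noteq> 0}" by (auto simp: fun_eq_iff)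
    then show ?thesis using t unfolding R_def tensor_alg_def
      by (auto intro: finite_subset multilin_scale)
  qed
  then show "(\<lambda>k vs. c * t k vs) \<in> R" using t by (auto simp: R_def intro: fun_span_scale)
next
  fix t n assume t: "t \<in> R"
  then show "hom_part n (t n) \<in> R"
    by (auto simp: R_def hom_part_apply tensor_alg_hom tensor_algD fun_span_zero)
next
  fix n f \<sigma> assume h: "hom_part n f \<in> R" and sg: "\<sigma> permutes {..<n}"
  have mf: "multilin s n f" using tensor_algD[of "hom_part n f" s n] h by (simp add: R_def hom_part_apply)
  have "\<forall>k\<ge>1. k = n \<longrightarrow> f \<in> fun_span (PX \<tau> n)" using h by (auto simp: R_def hom_part_apply)
  then show "hom_part n (perm_tensor n \<sigma> f) \<in> R"
    using multilin_perm[OF sg mf] perm_in_span[OF sym sg]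
    by (auto simp: R_def hom_part_apply tensor_alg_hom fun_span_zero)
qed


lemma part_single:
  assumes ml: "multilin s m (\<tau> m)"
  shows "part_tensor \<tau> m {{..<m}} = \<tau> m"
proof
  fix vs
  show "part_tensor \<tau> m {{..<m}} vs = \<tau> m vs"
  proof (cases "length vs = m")
    case True
    then have "map ((!) vs) [0..<m] = vs" by (metis map_nth)
    then show ?thesis using True by (simp add: part_tensor_def lessThan_atLeast0)
  next
    case False then show ?thesis using ml by (simp add: part_tensor_def multilin_def)
  qed
qed

lemma claimC:
  fixes \<tau> :: "('v::ab_group_add, 'a::field) tensor" and s :: "'a \<Rightarrow> 'v \<Rightarrow> 'v"
  assumes sym: "\<forall>n\<ge>1. symmetric_tensor s n (\<tau> n)"
    and A: "perm_inv_subalg s A" and S: "\<forall>n\<ge>1. hom_part n (\<tau> n) \<in> A"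
  shows "partition_on {..<n} P \<Longrightarrow> hom_part n (part_tensor \<tau> n P) \<in> A"
proof (induction n arbitrary: P rule: less_induct)
  case (less n P)
  have sc: "\<And>c. scalar_tensor c \<in> A" and tp: "\<And>t u. t \<in> A \<Longrightarrow> u \<in> A \<Longrightarrow> tprod t u \<in> A"
    and pm: "\<And>n f \<sigma>. hom_part n f \<in> A \<Longrightarrow> \<sigma> permutes {..<n} \<Longrightarrow> hom_part n (perm_tensor n \<sigma> f) \<in> A"
    using A unfolding perm_inv_subalg_def graded_subalg_def unital_subalg_def by blast+
  show ?case
  proof (cases "n = 0")
    case True
    then have "P = {}" using less.prems by (simp add: partition_on_empty)
    then have "hom_part n (part_tensor \<tau> n P) = scalar_tensor 1"
      using True by (auto simp: part_tensor_def scalar_tensor_def hom_part_def fun_eq_iff)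
    then show ?thesis using sc by simp
  next
    case False
    have UP: "\<Union>P = {..<n}" using partition_onD1[OF less.prems] by simp
    then have "P \<noteq> {}" using False by auto
    then obtain B where B: "B \<in> P" by blast
    have Bs: "B \<subseteq> {..<n}" "B \<noteq> {}" using partition_on_blocks[OF less.prems B] by auto
    have fB: "finite B" using Bs finite_subset by blast
    define m where "m = card B"
    define k where "k = n - m"
    have m1: "m \<ge> 1" using Bs fB by (simp add: m_def Suc_le_eq card_gt_0_iff)
    have mn: "m \<le> n" using card_mono[OF _ Bs(1)] by (simp add: m_def)
    have kn: "k < n" "n = k + m" using m1 mn by (auto simp: k_def)
    define T where "T = (+) k ` {..<m}"
    have T: "T = {k..<n}" using kn by (simp add: T_def lessThan_atLeast0 add.commute)
    have dj: "disjnt B (\<Union>(P - {B}))"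
      using partition_onD2[OF less.prems] B unfolding disjoint_def pairwise_def disjnt_def by blast
    have PB: "insert B (P - {B}) = P" using B by blast
    have P': "partition_on ({..<n} - B) (P - {B})"
      using partition_on_insert[OF dj, of "{..<n}"] less.prems PB by simp
    have cardD: "card ({..<n} - B) = k" using Bs fB by (simp add: card_Diff_subset m_def k_def)
    obtain f1 where f1: "bij_betw f1 {..<k} ({..<n} - B)"
      using finite_same_card_bij[of "{..<k}" "{..<n} - B"] cardD by auto
    have cT: "card T = m" by (simp add: T_def card_image inj_on_def)
    obtain f2 where f2: "bij_betw f2 T B"
      using finite_same_card_bij[of T B] cT fB by (auto simp: m_def T_def)
    define \<rho> where "\<rho> x = (if x < k then f1 x else if x < n then f2 x else x)" for x
    have b1: "bij_betw \<rho> {..<k} ({..<n} - B)"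
      using f1 by (rule bij_betw_cong[THEN iffD1, rotated]) (simp add: \<rho>_def)
    have b2: "bij_betw \<rho> T B"
      using f2 by (rule bij_betw_cong[THEN iffD1, rotated]) (simp add: \<rho>_def T)
    have "bij_betw \<rho> ({..<k} \<union> T) (({..<n} - B) \<union> B)"
      by (rule bij_betw_combine[OF b1 b2]) auto
    moreover have "{..<k} \<union> T = {..<n}" using kn by (auto simp: T)
    moreover have "({..<n} - B) \<union> B = {..<n}" using Bs by auto
    ultimately have bb: "bij_betw \<rho> {..<n} {..<n}" by simp
    have rp: "\<rho> permutes {..<n}" by (rule bij_imp_permutes[OF bb]) (simp add: \<rho>_def kn)
    have injr: "inj \<rho>" using rp by (rule permutes_inj)
    have surjr: "surj \<rho>" using rp by (rule permutes_surj)
    have im1: "\<rho> ` {..<k} = {..<n} - B" using b1 by (simp add: bij_betw_def)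
    have im2: "\<rho> ` T = B" using b2 by (simp add: bij_betw_def)
    define Q' where "Q' = (`) (inv \<rho>) ` (P - {B})"
    have "partition_on (inv \<rho> ` ({..<n} - B)) (Q' - {{}})"
      unfolding Q'_def
      by (rule partition_on_inj_image[OF P']) (use permutes_inj[OF permutes_inv[OF rp]] in \<open>auto simp: inj_on_def\<close>)
    moreover have "inv \<rho> ` ({..<n} - B) = {..<k}" using im1 injr by (metis image_inv_f_f)
    moreover have "Q' - {{}} = Q'" using partition_onD3[OF P'] by (auto simp: Q'_def)
    ultimately have Q': "partition_on {..<k} Q'" by simp
    have IH: "hom_part k (part_tensor \<tau> k Q') \<in> A" using less.IH[OF kn(1) Q'] .
    have mlm: "multilin s m (\<tau> m)" using sym m1 by (simp add: symmetric_tensor_def)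
    have sing: "partition_on {..<m} {{..<m}}" using m1 by (intro partition_on_space) (auto simp: lessThan_empty_iff)
    have "hom_part m (\<tau> m) \<in> A" using S m1 by simp
    then have "hom_part m (part_tensor \<tau> m {{..<m}}) \<in> A" using part_single[of s m \<tau>, OF mlm] by simp
    from tp[OF IH this] have "hom_part (k + m) (join k m (part_tensor \<tau> k Q') (part_tensor \<tau> m {{..<m}})) \<in> A"
      by (simp add: tprod_hom)
    then have "hom_part n (part_tensor \<tau> n (Q' \<union> {T})) \<in> A"
      using join_part[OF sym Q' sing] kn by (simp add: T_def)
    moreover have R: "partition_on {..<n} (Q' \<union> {T})"
      using partition_shift[OF Q' sing] kn by (simp add: T_def)
    ultimately have "hom_part n (perm_tensor n (inv \<rho>) (part_tensor \<tau> n (Q' \<union> {T}))) \<in> A"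
      using pm permutes_inv[OF rp] by blast
    also have "perm_tensor n (inv \<rho>) (part_tensor \<tau> n (Q' \<union> {T})) = part_tensor \<tau> n ((`) \<rho> ` (Q' \<union> {T}))"
      using perm_part[OF sym permutes_inv[OF rp] R] inv_inv_eq[OF permutes_bij[OF rp]] by simp
    also have "(`) \<rho> ` (Q' \<union> {T}) = P"
    proof -
      have "(`) \<rho> ` Q' = P - {B}"
        unfolding Q'_def image_image using surjr by (simp add: image_image surj_f_inv_f)
      then show ?thesis using im2 PB by auto
    qed
    finally show ?thesis .
  qed
qed

lemma hom_part_linear:
  fixes f g :: "'v list \<Rightarrow> 'a::comm_ring_1"
  shows
  "hom_part k (0::'v list \<Rightarrow> 'a::comm_ring_1) = 0"
  "hom_part k (f + g) = hom_part k f + hom_part k g"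
  "hom_part k (\<lambda>x. c * f x) = (\<lambda>k' vs. c * hom_part k f k' vs)"
  by (auto simp: hom_part_def fun_eq_iff)

theorem proposition2p9:
  fixes scale :: "'a::field \<Rightarrow> 'v::ab_group_add \<Rightarrow> 'v"
    and \<tau> :: "('v, 'a) tensor"
  assumes "vector_space scale"
    and "\<forall>n\<ge>1. symmetric_tensor scale n (\<tau> n)"
  shows "A_perm scale {hom_part n (\<tau> n) | n. n \<ge> 1} =
    {t \<in> tensor_alg scale. \<forall>n\<ge>1. t n \<in> fun_span {part_tensor \<tau> n P | P. partition_on {..<n} P}}"
proof -
  note sym = assms(2)
  define S where "S = {hom_part n (\<tau> n) | n. n \<ge> 1}"
  define R where "R = {t \<in> tensor_alg scale. \<forall>n\<ge>1. t n \<in> fun_span (PX \<tau> n)}"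
  have Req: "{t \<in> tensor_alg scale. \<forall>n\<ge>1. t n \<in> fun_span {part_tensor \<tau> n P | P. partition_on {..<n} P}} = R"
    by (simp add: R_def PX_def)
  have "S \<subseteq> R"
  proof
    fix x assume "x \<in> S"
    then obtain n where n: "n \<ge> 1" "x = hom_part n (\<tau> n)" by (auto simp: S_def)
    have ml: "multilin scale n (\<tau> n)" using sym n by (simp add: symmetric_tensor_def)
    have "\<tau> n \<in> PX \<tau> n"
      using part_single[of scale n \<tau>, OF ml] n unfolding PX_def
      by (intro CollectI exI[of _ "{{..<n}}"]) (auto intro!: partition_on_space simp: lessThan_empty_iff)
    then show "x \<in> R" using n ml
      by (auto simp: R_def tensor_alg_hom hom_part_apply fun_span_zero intro: fun_span_base)
  qed
  then have sub1: "A_perm scale S \<subseteq> R"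
    using R_subalg[OF sym] unfolding A_perm_def R_def by blast
  have sub2: "R \<subseteq> A_perm scale S"
  proof
    fix t assume t: "t \<in> R"
    show "t \<in> A_perm scale S" unfolding A_perm_def
    proof (rule InterI, clarify)
      fix A assume A: "perm_inv_subalg scale A" and SA: "S \<subseteq> A"
      have sc: "\<And>c. scalar_tensor c \<in> A" and ad: "\<And>t u. t \<in> A \<Longrightarrow> u \<in> A \<Longrightarrow> t + u \<in> A"
        and sm: "\<And>c t. t \<in> A \<Longrightarrow> (\<lambda>k vs. c * t k vs) \<in> A"
        using A unfolding perm_inv_subalg_def graded_subalg_def unital_subalg_def by blast+
      have "scalar_tensor (0::'a) = (0 :: ('v, 'a) tensor)"
        by (rule ext)+ (simp add: scalar_tensor_def hom_part_def)
      then have zero: "0 \<in> A" using sc[of 0] by simp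
      have SA': "\<forall>n\<ge>1. hom_part n (\<tau> n) \<in> A" using SA by (auto simp: S_def)
      have ta: "t \<in> tensor_alg scale" using t by (simp add: R_def)
      obtain N where N: "\<forall>n>N. t n = 0" using tensor_alg_bound[OF ta] by blast
      have teq: "t = (\<Sum>k\<le>N. hom_part k (t k))"
      proof
        fix n
        have "(\<Sum>k\<le>N. hom_part k (t k)) n = (\<Sum>k\<le>N. if n = k then t n else 0)"
          by (simp add: sum_fun_apply hom_part_apply)
        also have "\<dots> = t n" using N by (auto simp: not_le[symmetric])
        finally show "t n = (\<Sum>k\<le>N. hom_part k (t k)) n" by simp
      qed
      have comp: "hom_part k (t k) \<in> A" for k
      proof (cases "k = 0")
        case True
        have "hom_part 0 (t 0) = scalar_tensor (t 0 [])"
          by (subst multilin0[OF tensor_algD[OF ta]]) (simp add: scalar_tensor_def)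
        then show ?thesis using sc True by simp
      next
        case False
        then have "t k \<in> fun_span (PX \<tau> k)" using t by (simp add: R_def)
        then show ?thesis
          apply (rule fun_span_induct[where P="\<lambda>g. hom_part k g \<in> A"])
             apply (simp_all add: hom_part_linear zero ad sm)
          using claimC[OF sym A SA'] by (auto simp: PX_def)
      qed
      have "(\<Sum>k\<in>I. hom_part k (t k)) \<in> A" if "finite I" for I
        using that
      proof (induct I rule: finite_induct)
        case empty show ?case using zero by (simp only: sum.empty)
      next
        case (insert x F)
        show ?case unfolding sum.insert[OF insert(1,2)] by (rule ad[OF comp insert(3)])
      qed
      then show "t \<in> A" using teq by (metis finite_atMost)
    qed
  qed
  show ?thesis using sub1 sub2 Req S_def by blast
qed

end
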